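(* Let $\chi$ and $\tau$ be fixed positive integers. For each $n$ let $G$ be an $n$-vertex graph and $\Sigma\subseteq V(G)$ with $|\Sigma|=n-o(n)$, such that for every pair of vertices $u,v\in\Sigma$ there is a $(u,v)$-path $u=u_0,u_1,\dots,u_{l-1},u_l=v$ with $l\le\chi$ and $\min\{\deg(u_i),\deg(u_{i+1})\}\le\tau$ for every $0\le i\le l-1$. If a uniformly random vertex of $G$ knows a rumor, then with probability $1-o(1)$ after $6\tau(\chi+\log n)$ rounds of the Push-Pull protocol at least $n-o(n)$ vertices know the rumor.
   Context: Push-Pull protocol: in synchronous rounds, every informed vertex contacts a uniformly random neighbor and sends it the rumor, and every uninformed vertex contacts a uniformly random neighbor and receives the rumor if that neighbor knows it; all random choices are independent, and a vertex informed in a round cannot forward the rumor in that same round. *)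

theory Defs
  imports "HOL-Probability.Probability" "HOL-Library.Landau_Symbols"
begin

definition is_graph :: "nat \<Rightarrow> (nat \<Rightarrow> nat \<Rightarrow> bool) \<Rightarrow> bool" where
  "is_graph n E \<longleftrightarrow> (\<forall>u v. E u v \<longrightarrow> u < n \<and> v < n \<and> u \<noteq> v \<and> E v u)"

definition nbrs :: "nat \<Rightarrow> (nat \<Rightarrow> nat \<Rightarrow> bool) \<Rightarrow> nat \<Rightarrow> nat set" where
  "nbrs n E v = {u. u < n \<and> E v u}"

definition deg :: "nat \<Rightarrow> (nat \<Rightarrow> nat \<Rightarrow> bool) \<Rightarrow> nat \<Rightarrow> nat" where
  "deg n E v = card (nbrs n E v)"

text \<open>A (u,v)-path u = p!0, ..., p!l = v of length l = length p - 1.\<close>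
definition is_path :: "(nat \<Rightarrow> nat \<Rightarrow> bool) \<Rightarrow> nat list \<Rightarrow> nat \<Rightarrow> nat \<Rightarrow> bool" where
  "is_path E p u v \<longleftrightarrow> p \<noteq> [] \<and> hd p = u \<and> last p = v \<and> distinct p \<and>
     (\<forall>i. Suc i < length p \<longrightarrow> E (p ! i) (p ! Suc i))"

definition contact :: "nat \<Rightarrow> (nat \<Rightarrow> nat \<Rightarrow> bool) \<Rightarrow> nat \<Rightarrow> nat option pmf" where
  "contact n E v = (if nbrs n E v = {} then return_pmf None
                    else map_pmf Some (pmf_of_set (nbrs n E v)))"

text \<open>One synchronous Push-Pull round from informed set I. Transmission uses only the
  informed set at the start of the round.\<close>
definition pp_update :: "nat \<Rightarrow> nat set \<Rightarrow> (nat \<Rightarrow> nat option) \<Rightarrow> nat set" where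
  "pp_update n I c = I
     \<union> {v. v < n \<and> v \<notin> I \<and> (\<exists>u. c v = Some u \<and> u \<in> I)}
     \<union> {u. \<exists>v\<in>I. c v = Some u}"

definition pp_round :: "nat \<Rightarrow> (nat \<Rightarrow> nat \<Rightarrow> bool) \<Rightarrow> nat set \<Rightarrow> nat set pmf" where
  "pp_round n E I = map_pmf (pp_update n I) (Pi_pmf {0..<n} None (contact n E))"

fun pp_rounds :: "nat \<Rightarrow> (nat \<Rightarrow> nat \<Rightarrow> bool) \<Rightarrow> nat \<Rightarrow> nat set \<Rightarrow> nat set pmf" where
  "pp_rounds n E 0 I = return_pmf I"
| "pp_rounds n E (Suc k) I = bind_pmf (pp_rounds n E k I) (pp_round n E)"

definition pp_from_random :: "nat \<Rightarrow> (nat \<Rightarrow> nat \<Rightarrow> bool) \<Rightarrow> nat \<Rightarrow> nat set pmf" where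
  "pp_from_random n E k = bind_pmf (pmf_of_set {0..<n}) (\<lambda>s. pp_rounds n E k {s})"

end

theory Submission imports Defs begin

lemma prob_bind_pmf:
  "measure_pmf.prob (bind_pmf M N) X = measure_pmf.expectation M (\<lambda>x. measure_pmf.prob (N x) X)"
  unfolding measure_pmf_bind
  by (rule measure_pmf.measure_bind[where N="count_space UNIV"])
     (auto simp: space_subprob_algebra measure_pmf.subprob_space_axioms)

lemma pp_rounds_Suc':
  "pp_rounds n E (Suc k) I = bind_pmf (pp_round n E I) (\<lambda>J. pp_rounds n E k J)"
proof (induction k arbitrary: I)
  case 0 then show ?case by (simp add: bind_return_pmf bind_return_pmf')
next
  case (Suc k)
  have "pp_rounds n E (Suc (Suc k)) I = bind_pmf (pp_rounds n E (Suc k) I) (pp_round n E)" by simp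
  also have "\<dots> = bind_pmf (bind_pmf (pp_round n E I) (\<lambda>J. pp_rounds n E k J)) (pp_round n E)"
    by (simp only: Suc)
  also have "\<dots> = bind_pmf (pp_round n E I) (\<lambda>J. pp_rounds n E (Suc k) J)"
    by (simp add: bind_assoc_pmf)
  finally show ?case .
qed

lemma pp_rounds_add:
  "pp_rounds n E (k + r) I = bind_pmf (pp_rounds n E k I) (\<lambda>J. pp_rounds n E r J)"
proof (induction r)
  case 0 then show ?case by (simp add: bind_return_pmf')
next
  case (Suc r)
  show ?case by (simp add: Suc bind_assoc_pmf)
qed

lemma pp_round_mono: "J \<in> set_pmf (pp_round n E I) \<Longrightarrow> I \<subseteq> J"
  unfolding pp_round_def pp_update_def by auto

lemma pp_rounds_mono: "J \<in> set_pmf (pp_rounds n E k I) \<Longrightarrow> I \<subseteq> J"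
  by (induction k arbitrary: J) (auto dest!: pp_round_mono)

lemma nbrs_finite: "finite (nbrs n E v)"
  unfolding nbrs_def by auto

lemma prob_contact:
  assumes "w < n" "E w w'" "w' < n"
  shows "measure_pmf.prob (Pi_pmf {0..<n} None (contact n E)) {c. c w = Some w'} = 1 / real (deg n E w)"
proof -
  have w'in: "w' \<in> nbrs n E w" using assms by (simp add: nbrs_def)
  hence ne: "nbrs n E w \<noteq> {}" by auto
  have "measure_pmf.prob (Pi_pmf {0..<n} None (contact n E)) {c. c w = Some w'}
      = measure_pmf.prob (map_pmf (\<lambda>c. c w) (Pi_pmf {0..<n} None (contact n E))) {Some w'}"
    by (simp add: vimage_def)
  also have "\<dots> = measure_pmf.prob (contact n E w) {Some w'}"
    using assms by (simp add: Pi_pmf_component)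
  also have "\<dots> = pmf (pmf_of_set (nbrs n E w)) w'"
    using ne by (simp add: contact_def measure_pmf_single pmf_map_inj')
  also have "\<dots> = 1 / real (deg n E w)"
    using ne w'in nbrs_finite by (simp add: deg_def)
  finally show ?thesis .
qed

lemma step_bound:
  assumes g: "is_graph n E" and aI: "a \<in> I" and ab: "E a b"
    and md: "min (deg n E a) (deg n E b) \<le> tau" and tp: "tau > 0"
  shows "measure_pmf.prob (pp_round n E I) {J. b \<notin> J} \<le> 1 - 1 / real tau"
proof -
  have abn: "a < n" "b < n" "E b a" using g ab by (auto simp: is_graph_def)
  obtain w w' where ww: "w < n" "w' < n" "E w w'" "deg n E w \<le> tau"
      and sub: "{c. b \<notin> pp_update n I c} \<subseteq> {c. c w \<noteq> Some w'}"
  proof (cases "deg n E a \<le> tau")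
    case True
    show ?thesis
      by (rule that[of a b]) (use abn ab aI True in \<open>auto simp: pp_update_def\<close>)
  next
    case False
    hence "deg n E b \<le> tau" using md by simp
    show ?thesis
      by (rule that[of b a]) (use abn aI \<open>deg n E b \<le> tau\<close> in \<open>auto simp: pp_update_def\<close>)
  qed
  have dpos: "deg n E w > 0"
    using ww nbrs_finite[of n E w] unfolding deg_def
    by (metis (mono_tags, lifting) card_gt_0_iff empty_iff mem_Collect_eq nbrs_def)
  have "measure_pmf.prob (pp_round n E I) {J. b \<notin> J}
      = measure_pmf.prob (Pi_pmf {0..<n} None (contact n E)) {c. b \<notin> pp_update n I c}"
    by (simp add: pp_round_def vimage_def)
  also have "\<dots> \<le> measure_pmf.prob (Pi_pmf {0..<n} None (contact n E)) {c. c w \<noteq> Some w'}"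
    by (rule measure_pmf.finite_measure_mono[OF sub]) simp
  also have "\<dots> = 1 - measure_pmf.prob (Pi_pmf {0..<n} None (contact n E)) {c. c w = Some w'}"
    by (subst measure_pmf.prob_compl[symmetric]) (auto intro!: arg_cong[where f="measure_pmf.prob _"])
  also have "\<dots> = 1 - 1 / real (deg n E w)" using prob_contact ww by simp
  also have "\<dots> \<le> 1 - 1 / real tau"
    using ww dpos by (simp add: frac_le)
  finally show ?thesis .
qed

lemma prob_bind_le:
  assumes le: "\<And>x. x \<in> set_pmf M \<Longrightarrow> measure_pmf.prob (N x) X \<le> g x"
    and gb: "\<And>x. \<bar>g x\<bar> \<le> B"
  shows "measure_pmf.prob (bind_pmf M N) X \<le> measure_pmf.expectation M g"
proof -
  have "measure_pmf.prob (bind_pmf M N) X = measure_pmf.expectation M (\<lambda>x. measure_pmf.prob (N x) X)"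
    by (rule prob_bind_pmf)
  also have "\<dots> \<le> measure_pmf.expectation M g"
  proof (rule integral_mono_AE)
    show "integrable (measure_pmf M) (\<lambda>x. measure_pmf.prob (N x) X)"
      by (rule measure_pmf.integrable_const_bound[where B=1]) auto
    show "integrable (measure_pmf M) g"
      by (rule measure_pmf.integrable_const_bound[where B=B]) (use gb in auto)
    show "AE x in measure_pmf M. measure_pmf.prob (N x) X \<le> g x"
      using le by (simp add: AE_measure_pmf_iff)
  qed
  finally show ?thesis .
qed

lemma rounds_informed_zero:
  assumes "b \<in> J" shows "measure_pmf.prob (pp_rounds n E m J) {K. b \<notin> K} = 0"
  using assms pp_rounds_mono by (subst measure_pmf_zero_iff) blast

lemma edge_rounds:
  assumes g: "is_graph n E" and aI: "a \<in> I" and ab: "E a b"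
    and md: "min (deg n E a) (deg n E b) \<le> tau" and tp: "tau > 0"
  shows "measure_pmf.prob (pp_rounds n E m I) {J. b \<notin> J} \<le> (1 - 1 / real tau) ^ m"
  using aI
proof (induction m arbitrary: I)
  case 0 then show ?case by simp
next
  case (Suc m)
  define q where "q = 1 - 1 / real tau"
  have q01: "0 \<le> q" "q \<le> 1" using tp by (auto simp: q_def)
  have "measure_pmf.prob (pp_rounds n E (Suc m) I) {J. b \<notin> J}
     \<le> measure_pmf.expectation (pp_round n E I) (\<lambda>J. q ^ m * indicator {J. b \<notin> J} J)"
    unfolding pp_rounds_Suc'
  proof (rule prob_bind_le[where B=1])
    fix J assume J: "J \<in> set_pmf (pp_round n E I)"
    show "measure_pmf.prob (pp_rounds n E m J) {J. b \<notin> J} \<le> q ^ m * indicator {J. b \<notin> J} J"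
    proof (cases "b \<in> J")
      case True then show ?thesis using rounds_informed_zero by simp
    next
      case False
      have "a \<in> J" using pp_round_mono[OF J] Suc.prems by auto
      then show ?thesis using Suc.IH False by (simp add: q_def)
    qed
  next
    fix J show "\<bar>q ^ m * indicator {J. b \<notin> J} J\<bar> \<le> 1"
      using q01 by (simp add: indicator_def power_le_one)
  qed
  also have "\<dots> = q ^ m * measure_pmf.prob (pp_round n E I) {J. b \<notin> J}"
    by simp
  also have "\<dots> \<le> q ^ m * q"
    using step_bound[OF g Suc.prems ab md tp] q01 by (intro mult_left_mono) (auto simp: q_def)
  finally show ?case by (simp add: q_def mult.commute)
qed

lemma rounds_more:
  assumes "k \<le> k'"
  shows "measure_pmf.prob (pp_rounds n E k' I) {J. v \<notin> J} \<le> measure_pmf.prob (pp_rounds n E k I) {J. v \<notin> J}"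
proof -
  obtain r where r: "k' = k + r" using assms le_Suc_ex by blast
  have "measure_pmf.prob (pp_rounds n E k' I) {J. v \<notin> J}
      \<le> measure_pmf.expectation (pp_rounds n E k I) (indicator {J. v \<notin> J})"
    unfolding r pp_rounds_add
  proof (rule prob_bind_le[where B=1])
    fix J show "measure_pmf.prob (pp_rounds n E r J) {J. v \<notin> J} \<le> indicator {J. v \<notin> J} J"
      by (cases "v \<in> J") (auto simp: rounds_informed_zero)
  qed (simp add: indicator_def)
  then show ?thesis by simp
qed

definition good_path :: "nat \<Rightarrow> (nat \<Rightarrow> nat \<Rightarrow> bool) \<Rightarrow> nat \<Rightarrow> nat list \<Rightarrow> bool" where
  "good_path n E tau p \<longleftrightarrow> (\<forall>i. Suc i < length p \<longrightarrow> E (p ! i) (p ! Suc i) \<and>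
      min (deg n E (p ! i)) (deg n E (p ! Suc i)) \<le> tau)"

lemma path_rounds:
  assumes g: "is_graph n E" and tp: "tau > 0"
  shows "p \<noteq> [] \<Longrightarrow> hd p \<in> I \<Longrightarrow> good_path n E tau p \<Longrightarrow>
    measure_pmf.prob (pp_rounds n E (m * (length p - 1)) I) {J. last p \<notin> J}
      \<le> real (length p - 1) * (1 - 1 / real tau) ^ m"
proof (induction p arbitrary: I)
  case Nil then show ?case by simp
next
  case (Cons x xs)
  define q where "q = 1 - 1 / real tau"
  have q01: "0 \<le> q" "q \<le> 1" using tp by (auto simp: q_def)
  show ?case
  proof (cases xs)
    case Nil
    then show ?thesis using Cons.prems rounds_informed_zero by simp
  next
    case (Cons y ys)
    have gp: "good_path n E tau xs" using Cons.prems(3) unfolding good_path_def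
      by (metis Suc_less_eq length_Cons nth_Cons_Suc)
    have edge: "E x y" "min (deg n E x) (deg n E y) \<le> tau"
      using Cons.prems(3) \<open>xs = y # ys\<close> unfolding good_path_def by force+
    have len: "m * (length (x # xs) - 1) = m + m * (length xs - 1)"
      using Cons by simp
    have lastx: "last (x # xs) = last xs" using Cons by simp
    have "measure_pmf.prob (pp_rounds n E (m * (length (x # xs) - 1)) I) {J. last (x # xs) \<notin> J}
      \<le> measure_pmf.expectation (pp_rounds n E m I)
           (\<lambda>J. real (length xs - 1) * q ^ m + indicator {J. y \<notin> J} J)"
      unfolding len pp_rounds_add lastx
    proof (rule prob_bind_le[where B="real (length xs) + 1"])
      fix J
      show "measure_pmf.prob (pp_rounds n E (m * (length xs - 1)) J) {J. last xs \<notin> J}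
          \<le> real (length xs - 1) * q ^ m + indicator {J. y \<notin> J} J"
      proof (cases "y \<in> J")
        case True
        then show ?thesis using Cons.IH[of J] gp \<open>xs = y # ys\<close> by (simp add: q_def)
      next
        case False
        have "measure_pmf.prob (pp_rounds n E (m * (length xs - 1)) J) {J. last xs \<notin> J} \<le> 1"
          by simp
        moreover have "0 \<le> real (length xs - 1) * q ^ m" using q01 by simp
        ultimately have "measure_pmf.prob (pp_rounds n E (m * (length xs - 1)) J) {J. last xs \<notin> J}
            \<le> real (length xs - 1) * q ^ m + 1" by linarith
        then show ?thesis using False by simp
      qed
      have "real (length xs - 1) * q ^ m \<le> real (length xs - 1) * 1"
        using q01 by (intro mult_left_mono power_le_one) auto
      then show "\<bar>real (length xs - 1) * q ^ m + indicator {J. y \<notin> J} J\<bar> \<le> real (length xs) + 1"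
        using q01 by (auto simp: indicator_def)
    qed
    also have "\<dots> = real (length xs - 1) * q ^ m + measure_pmf.prob (pp_rounds n E m I) {J. y \<notin> J}"
      by (subst Bochner_Integration.integral_add) (auto intro!: measure_pmf.integrable_const_bound[where B=1])
    also have "\<dots> \<le> real (length xs - 1) * q ^ m + q ^ m"
      using edge_rounds[OF g _ edge tp, of I m] Cons.prems(2) by (simp add: q_def)
    also have "\<dots> = real (length (x # xs) - 1) * q ^ m"
      using Cons by (simp add: algebra_simps)
    finally show ?thesis by (simp add: q_def)
  qed
qed

lemma contact_set: "Some u \<in> set_pmf (contact n E v) \<Longrightarrow> u < n"
  unfolding contact_def by (auto split: if_splits simp: nbrs_finite nbrs_def)

lemma round_bounded:
  assumes I: "I \<subseteq> {0..<n}" and J: "J \<in> set_pmf (pp_round n E I)"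
  shows "J \<subseteq> {0..<n}"
proof -
  obtain c where c: "c \<in> set_pmf (Pi_pmf {0..<n} None (contact n E))" and Jc: "J = pp_update n I c"
    using J unfolding pp_round_def by auto
  have cs: "\<And>x. x < n \<Longrightarrow> c x \<in> set_pmf (contact n E x)"
    using c by (auto simp: set_Pi_pmf PiE_dflt_def)
  show ?thesis
  proof
    fix u assume "u \<in> J"
    then consider "u \<in> I" | "u < n" | v where "v \<in> I" "c v = Some u"
      unfolding Jc pp_update_def by blast
    then show "u \<in> {0..<n}"
    proof cases
      case 3
      then have "v < n" using I by auto
      then show ?thesis using cs[of v] 3 contact_set by fastforce
    qed (use I in auto)
  qed
qed

lemma rounds_bounded:
  "I \<subseteq> {0..<n} \<Longrightarrow> J \<in> set_pmf (pp_rounds n E k I) \<Longrightarrow> J \<subseteq> {0..<n}"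
proof (induction k arbitrary: J)
  case (Suc k)
  then obtain K where "K \<in> set_pmf (pp_rounds n E k I)" "J \<in> set_pmf (pp_round n E K)" by auto
  then show ?case using Suc round_bounded by blast
qed simp

lemma start_bound:
  assumes Ssub: "Sig \<subseteq> {0..<n}" and sS: "s \<in> Sig"
    and pv: "\<And>v. v \<in> Sig \<Longrightarrow> measure_pmf.prob (pp_rounds n E T {s}) {J. v \<notin> J} \<le> eps"
    and dp: "d > 0" and ed: "eps \<le> d^2"
  shows "measure_pmf.prob (pp_rounds n E T {s})
           {J. real n - ((real n - real (card Sig)) + real n * d) \<le> real (card J)} \<ge> 1 - d"
proof -
  define P where "P = pp_rounds n E T {s}"
  define X where "X J = real (card (Sig - J))" for J
  have finS: "finite Sig" using Ssub finite_subset by blast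
  have np: "n > 0" using Ssub sS by auto
  have e0: "eps \<ge> 0" using pv[OF sS] measure_nonneg[of _ "{J. s \<notin> J}"] by (meson order_trans)
  have cardS: "card Sig \<le> n" using card_mono[OF _ Ssub] by simp
  have Xsum: "X J = (\<Sum>v\<in>Sig. indicator {J. v \<notin> J} J)" for J
  proof -
    have "(\<Sum>v\<in>Sig. indicator {J. v \<notin> J} J :: real) = (\<Sum>v\<in>Sig. indicator (- J) v)"
      by (intro sum.cong) (auto simp: indicator_def)
    also have "\<dots> = real (card (Sig \<inter> - J))"
    proof -
      have "real (card (Sig \<inter> - J)) = real (\<Sum>v\<in>Sig. indicator (- J) v :: nat)"
        by (simp only: sum_indicator_eq_card[OF finS])
      also have "\<dots> = (\<Sum>v\<in>Sig. real (indicator (- J) v :: nat))" by (rule of_nat_sum)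
      finally show ?thesis by (simp add: real_of_nat_indicator del: of_nat_sum)
    qed
    finally show ?thesis by (simp add: X_def Diff_eq)
  qed
  have EX: "measure_pmf.expectation P X = (\<Sum>v\<in>Sig. measure_pmf.prob P {J. v \<notin> J})"
    unfolding Xsum
    by (subst Bochner_Integration.integral_sum)
       (auto intro!: measure_pmf.integrable_const_bound[where B=1])
  also have "\<dots> \<le> (\<Sum>v\<in>Sig. eps)" using pv by (intro sum_mono) (simp add: P_def)
  also have "\<dots> \<le> real n * eps" using cardS e0 by (simp add: mult_right_mono)
  finally have EXle: "measure_pmf.expectation P X \<le> real n * eps" .
  have ndp: "real n * d > 0" using np dp by simp
  have markov: "measure_pmf.prob P {J. X J \<ge> real n * d} \<le> measure_pmf.expectation P X / (real n * d)"
  proof -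
    have "integrable (measure_pmf P) X"
      by (rule measure_pmf.integrable_const_bound[where B="real (card Sig)"])
         (auto simp: X_def intro!: card_mono finS)
    then show ?thesis
      using integral_Markov_inequality_measure[of "measure_pmf P" X UNIV "real n * d"] ndp
      by (simp add: X_def[abs_def])
  qed
  also have "\<dots> \<le> real n * eps / (real n * d)"
    by (rule divide_right_mono[OF EXle]) (use ndp in simp)
  also have "\<dots> = eps / d" using np by simp
  also have "\<dots> \<le> d" using ed dp by (simp add: divide_le_eq power2_eq_square)
  finally have mk: "measure_pmf.prob P {J. X J \<ge> real n * d} \<le> d" .
  define G where "G = {J :: nat set. real n - ((real n - real (card Sig)) + real n * d) \<le> real (card J)}"
  have "measure_pmf.prob P (- G) \<le> measure_pmf.prob P {J. X J \<ge> real n * d}"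
  proof (rule measure_pmf.finite_measure_mono_AE)
    show "AE x in measure_pmf P. x \<in> - G \<longrightarrow> x \<in> {J. real n * d \<le> X J}"
      unfolding AE_measure_pmf_iff
    proof (intro ballI impI)
      fix J assume J: "J \<in> set_pmf P" and nG: "J \<in> - G"
      have "s < n" using sS Ssub by auto
      hence "J \<subseteq> {0..<n}" using rounds_bounded[of "{s}" n J E T] J by (simp add: P_def)
      hence finJ: "finite J" using finite_subset by blast
      have "card (Sig \<inter> J) \<le> card J" using finJ by (simp add: card_mono)
      moreover have "card Sig = card (Sig \<inter> J) + card (Sig - J)" using card_Int_Diff finS by blast
      ultimately have "real (card Sig) \<le> real (card J) + X J" unfolding X_def by linarith
      then show "J \<in> {J. real n * d \<le> X J}" using nG by (simp add: G_def)
    qed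
  qed simp
  hence "measure_pmf.prob P (- G) \<le> d" using mk by linarith
  moreover have "measure_pmf.prob P (- G) = 1 - measure_pmf.prob P G"
    by (simp add: measure_pmf.prob_compl[symmetric] Compl_eq_Diff_UNIV)
  ultimately show ?thesis by (simp add: P_def G_def)
qed

lemma avg_bound:
  assumes Ssub: "Sig \<subseteq> {0..<n}" and np: "n > 0"
    and st: "\<And>s. s \<in> Sig \<Longrightarrow> measure_pmf.prob (pp_rounds n E T {s}) G \<ge> 1 - d"
  shows "measure_pmf.prob (pp_from_random n E T) G \<ge> real (card Sig) / real n * (1 - d)"
proof -
  have ne: "{0..<n} \<noteq> {}" using np by auto
  define f where "f s = measure_pmf.prob (pp_rounds n E T {s}) G" for s
  have "measure_pmf.prob (pp_from_random n E T) G = measure_pmf.expectation (pmf_of_set {0..<n}) f"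
    unfolding pp_from_random_def f_def by (rule prob_bind_pmf)
  also have "\<dots> = (\<Sum>s\<in>{0..<n}. f s) / real n"
    using ne by (simp add: integral_pmf_of_set)
  finally have eq: "measure_pmf.prob (pp_from_random n E T) G = (\<Sum>s\<in>{0..<n}. f s) / real n" .
  have "real (card Sig) * (1 - d) = (\<Sum>s\<in>Sig. 1 - d)" by simp
  also have "\<dots> \<le> (\<Sum>s\<in>Sig. f s)" using st by (intro sum_mono) (auto simp: f_def)
  also have "\<dots> \<le> (\<Sum>s\<in>{0..<n}. f s)"
    by (rule sum_mono2) (use Ssub in \<open>auto simp: f_def\<close>)
  finally have "real (card Sig) * (1 - d) / real n \<le> (\<Sum>s\<in>{0..<n}. f s) / real n"
    by (rule divide_right_mono) simp
  then show ?thesis using eq by simp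
qed

theorem lemma2:
  fixes chi tau :: nat
    and E :: "nat \<Rightarrow> nat \<Rightarrow> nat \<Rightarrow> bool"
    and Sig :: "nat \<Rightarrow> nat set"
  assumes "chi > 0" and "tau > 0"
    and graph: "\<And>n. is_graph n (E n)"
    and sub: "\<And>n. Sig n \<subseteq> {0..<n}"
    and big: "(\<lambda>n. real n - real (card (Sig n))) \<in> o(\<lambda>n. real n)"
    and paths: "\<And>n u v. u \<in> Sig n \<Longrightarrow> v \<in> Sig n \<Longrightarrow>
       \<exists>p. is_path (E n) p u v \<and> length p - 1 \<le> chi \<and>
           (\<forall>i. Suc i < length p \<longrightarrow>
              min (deg n (E n) (p ! i)) (deg n (E n) (p ! Suc i)) \<le> tau)"
  shows "\<exists>h :: nat \<Rightarrow> real. h \<in> o(\<lambda>n. real n) \<and>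
     (\<lambda>n. measure_pmf.prob
            (pp_from_random n (E n) (nat \<lceil>6 * real tau * (real chi + ln (real n))\<rceil>))
            {I. real (card I) \<ge> real n - h n})
     \<longlonglongrightarrow> 1"
proof -
  note cp = \<open>chi > 0\<close> and tp = \<open>tau > 0\<close>
  define q where "q = 1 - 1 / real tau"
  have q01: "0 \<le> q" "q < 1" using tp by (auto simp: q_def)
  define T where "T n = nat \<lceil>6 * real tau * (real chi + ln (real n))\<rceil>" for n :: nat
  define m where "m n = T n div chi" for n
  define eps where "eps n = real chi * q ^ m n" for n
  define d where "d n = sqrt (eps n + 1 / real (Suc n))" for n
  define h where "h n = (real n - real (card (Sig n))) + real n * d n" for n
  have e0: "eps n \<ge> 0" for n using q01 by (simp add: eps_def)
  have dpos: "d n > 0" for n using e0[of n] by (simp add: d_def add_nonneg_pos)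
  have ed: "eps n \<le> (d n)^2" for n using e0[of n] by (simp add: d_def add_nonneg_nonneg)
  have mT: "m n * chi \<le> T n" for n by (simp add: m_def)

  have pair: "measure_pmf.prob (pp_rounds n (E n) (T n) {s}) {J. v \<notin> J} \<le> eps n"
    if sv: "s \<in> Sig n" "v \<in> Sig n" for n s v
  proof -
    obtain p where p: "is_path (E n) p s v" "length p - 1 \<le> chi"
      and pd: "\<forall>i. Suc i < length p \<longrightarrow> min (deg n (E n) (p ! i)) (deg n (E n) (p ! Suc i)) \<le> tau"
      using paths[OF sv] by blast
    have pne: "p \<noteq> []" and hp: "hd p = s" and lp: "last p = v"
      using p(1) by (auto simp: is_path_def)
    have gp: "good_path n (E n) tau p" using p(1) pd by (auto simp: good_path_def is_path_def)
    have "measure_pmf.prob (pp_rounds n (E n) (T n) {s}) {J. v \<notin> J}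
        \<le> measure_pmf.prob (pp_rounds n (E n) (m n * (length p - 1)) {s}) {J. v \<notin> J}"
    proof (rule rounds_more)
      have "m n * (length p - 1) \<le> m n * chi" using p(2) by simp
      then show "m n * (length p - 1) \<le> T n" using mT[of n] by linarith
    qed
    also have "\<dots> \<le> real (length p - 1) * q ^ m n"
      using path_rounds[OF graph tp pne _ gp, of "{s}" "m n"] hp lp by (simp add: q_def)
    also have "\<dots> \<le> eps n"
      unfolding eps_def using p(2) q01 by (intro mult_right_mono) auto
    finally show ?thesis .
  qed

  have lower: "measure_pmf.prob (pp_from_random n (E n) (T n)) {I. real (card I) \<ge> real n - h n}
      \<ge> real (card (Sig n)) / real n * (1 - d n)" if np: "n > 0" for n
  proof (rule avg_bound[OF sub np])
    fix s assume sS: "s \<in> Sig n"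
    have "measure_pmf.prob (pp_rounds n (E n) (T n) {s})
           {J. real n - ((real n - real (card (Sig n))) + real n * d n) \<le> real (card J)} \<ge> 1 - d n"
      by (rule start_bound[OF sub sS pair[OF sS] dpos ed])
    then show "measure_pmf.prob (pp_rounds n (E n) (T n) {s}) {I. real (card I) \<ge> real n - h n} \<ge> 1 - d n"
      by (simp add: h_def)
  qed

  have mlim: "filterlim m at_top sequentially"
  proof (subst filterlim_at_top, intro allI)
    fix K :: nat
    have lnlim: "filterlim (\<lambda>n::nat. ln (real n)) at_top sequentially"
      by (rule filterlim_compose[OF ln_at_top filterlim_real_sequentially])
    have ev1: "eventually (\<lambda>n::nat. ln (real n) \<ge> real (K * chi)) sequentially"
      using lnlim by (simp add: filterlim_at_top)
    have ev2: "eventually (\<lambda>n::nat. n \<ge> 1) sequentially" by (rule eventually_ge_at_top)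
    show "eventually (\<lambda>n. K \<le> m n) sequentially"
      using ev1 ev2
    proof eventually_elim
      case (elim n)
      have ln0: "ln (real n) \<ge> 0" using elim by simp
      have "real (K * chi) \<le> 6 * real tau * (real chi + ln (real n))"
      proof -
        have "ln (real n) \<le> real chi + ln (real n)" by simp
        also have "\<dots> \<le> 6 * real tau * (real chi + ln (real n))"
        proof -
          have "1 \<le> 6 * real tau" using tp by simp
          hence "1 * (real chi + ln (real n)) \<le> 6 * real tau * (real chi + ln (real n))"
            by (rule mult_right_mono) (use ln0 in simp)
          then show ?thesis by simp
        qed
        finally show ?thesis using elim by linarith
      qed
      also have "\<dots> \<le> real (T n)" unfolding T_def by linarith
      finally have "K * chi \<le> T n" by linarith
      then show ?case unfolding m_def using cp by (simp add: less_eq_div_iff_mult_less_eq)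
    qed
  qed
  have epslim: "eps \<longlonglongrightarrow> 0"
  proof -
    have "(\<lambda>n. q ^ m n) \<longlonglongrightarrow> 0"
      by (rule filterlim_compose[OF LIMSEQ_power_zero mlim]) (use q01 in simp)
    then show ?thesis unfolding eps_def by (rule tendsto_mult_right_zero)
  qed
  have dlim: "d \<longlonglongrightarrow> 0"
  proof -
    have "(\<lambda>n. eps n + 1 / real (Suc n)) \<longlonglongrightarrow> 0 + 0"
      by (intro tendsto_add epslim LIMSEQ_inverse_real_of_nat[unfolded inverse_eq_divide])
    then have "(\<lambda>n. sqrt (eps n + 1 / real (Suc n))) \<longlonglongrightarrow> sqrt (0 + 0)"
      by (rule tendsto_real_sqrt)
    then show ?thesis by (simp add: d_def[abs_def])
  qed
  have ratio0: "(\<lambda>n. (real n - real (card (Sig n))) / real n) \<longlonglongrightarrow> 0"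
    using smalloD_tendsto[OF big] .
  have ratio: "(\<lambda>n. real (card (Sig n)) / real n) \<longlonglongrightarrow> 1"
  proof -
    have "(\<lambda>n. 1 - (real n - real (card (Sig n))) / real n) \<longlonglongrightarrow> 1 - 0"
      by (intro tendsto_diff tendsto_const ratio0)
    moreover have "eventually (\<lambda>n. 1 - (real n - real (card (Sig n))) / real n
                      = real (card (Sig n)) / real n) sequentially"
      using eventually_ge_at_top[of 1] by eventually_elim (simp add: field_simps)
    ultimately show ?thesis by (simp add: tendsto_cong)
  qed
  have lblim: "(\<lambda>n. real (card (Sig n)) / real n * (1 - d n)) \<longlonglongrightarrow> 1 * (1 - 0)"
    by (intro tendsto_mult ratio tendsto_diff tendsto_const dlim)

  have ho: "h \<in> o(\<lambda>n. real n)"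
  proof -
    have "(\<lambda>n. real n * d n) \<in> o(\<lambda>n. real n)"
    proof (rule smalloI_tendsto)
      have "eventually (\<lambda>n. d n = real n * d n / real n) sequentially"
        using eventually_ge_at_top[of 1] by eventually_elim simp
      then show "(\<lambda>n. real n * d n / real n) \<longlonglongrightarrow> 0"
        using dlim by (simp add: tendsto_cong)
      show "eventually (\<lambda>n. real n \<noteq> 0) sequentially"
        using eventually_ge_at_top[of 1] by eventually_elim simp
    qed
    then show ?thesis unfolding h_def[abs_def] by (intro sum_in_smallo big)
  qed

  define P where "P n = measure_pmf.prob (pp_from_random n (E n) (T n)) {I. real (card I) \<ge> real n - h n}" for n
  have "P \<longlonglongrightarrow> 1"
  proof (rule tendsto_sandwich[OF _ _ _ tendsto_const])
    show "(\<lambda>n. real (card (Sig n)) / real n * (1 - d n)) \<longlonglongrightarrow> 1" using lblim by simp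
    show "eventually (\<lambda>n. real (card (Sig n)) / real n * (1 - d n) \<le> P n) sequentially"
      using eventually_ge_at_top[of 1]
    proof eventually_elim
      case (elim n)
      then have "n > 0" by simp
      from lower[OF this] show "real (card (Sig n)) / real n * (1 - d n) \<le> P n"
        by (simp add: P_def)
    qed
    show "eventually (\<lambda>n. P n \<le> 1) sequentially" by (simp add: P_def)
  qed
  then show ?thesis using ho unfolding P_def T_def by blast
qed

end
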